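(* Let $H$ be a reduced double-well type potential, $\beta>0$, and $\mu_\beta$ its Gibbs measure. Then \begin{enumerate} \item $\mu_\beta[01]=\mu_\beta[10]$; \item $\frac{\mu_\beta[0^n1]}{\mu_\beta[01]}=\Big[\sum_{k\ge n}\lambda_\beta^{-k}e^{-\beta H_k^1}\Big]F_\beta^0(\lambda_\beta)$ for $n\ge1$, and $\frac{\mu_\beta[0]}{\mu_\beta[01]}=\frac{\tilde F_\beta^1(\lambda_\beta)}{F_\beta^1(\lambda_\beta)}$; \item $\frac{\mu_\beta[1^n0]}{\mu_\beta[10]}=\Big[\sum_{k\ge n}\lambda_\beta^{-k}e^{-\beta H_k^0}\Big]F_\beta^1(\lambda_\beta)$ for $n\ge1$, and $\frac{\mu_\beta[1]}{\mu_\beta[10]}=\frac{\tilde F_\beta^0(\lambda_\beta)}{F_\beta^0(\lambda_\beta)}$; \item $\frac{\mu_\beta[01^n0]}{\mu_\beta[10]}=\frac{e^{-\beta H_n^0}F_\beta^1(\lambda_\beta)}{\lambda_\beta^n}$ and $\frac{\mu_\beta[10^n1]}{\mu_\beta[01]}=\frac{e^{-\beta H_n^1}F_\beta^0(\lambda_\beta)}{\lambda_\beta^n}$; \item $\frac{\mu_\beta[0]}{\mu_\beta[1]}=\frac{F_\beta^0(\lambda_\beta)}{F_\beta^1(\lambda_\beta)}\cdot\frac{\tilde F_\beta^1(\lambda_\beta)}{\tilde F_\beta^0(\lambda_\beta)}$. \end{enumerate}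
   Context: $\Sigma:=\{0,1\}^{\mathbb N}$, $\sigma$ the left shift. A reduced double-well type potential is a continuous nonnegative $H:\Sigma\to\mathbb R$ with summable variation such that $H=0$ on $[00]\cup[11]$, $H=H_n^0>0$ on $[01^n0]$, $H=H_n^1>0$ on $[10^n1]$ ($n\ge1$), and $\sum_{k\ge1}\sup_{n\ge0}|H_k^i-H_{k+n}^i|<\infty$ ($i=0,1$). $\mathcal L_\beta[\Phi](x)=e^{-\beta H(0x)}\Phi(0x)+e^{-\beta H(1x)}\Phi(1x)$; $\Phi_\beta$ the unique positive continuous eigenfunction with $\max\Phi_\beta=1$, $\lambda_\beta$ its eigenvalue, $\nu_\beta$ the unique probability with $\mathcal L_\beta^*\nu_\beta=\lambda_\beta\nu_\beta$; Gibbs measure $\mu_\beta:=\Phi_\beta\nu_\beta/\int\Phi_\beta d\nu_\beta$. $F_\beta^i(\lambda):=\sum_{k\ge1}\lambda^{-k}e^{-\beta H_k^i}$, $\tilde F_\beta^i(\lambda):=\sum_{k\ge1}k\lambda^{-k}e^{-\beta H_k^i}$ ($i=0,1$). *)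

theory Defs
  imports "HOL-Analysis.Analysis" "HOL-Probability.Probability"
begin

text \<open>The full shift on two symbols. Symbol 0 is encoded as False, symbol 1 as True.\<close>
type_synonym sigma = "nat \<Rightarrow> bool"

definition SigmaT :: "sigma topology" where
  "SigmaT = product_topology (\<lambda>_. discrete_topology UNIV) UNIV"

definition SigmaM :: "sigma measure" where
  "SigmaM = (\<Pi>\<^sub>M i\<in>(UNIV::nat set). count_space (UNIV::bool set))"

definition cyl :: "bool list \<Rightarrow> sigma set" where
  "cyl w = {x. \<forall>i<length w. x i = w ! i}"

definition var :: "(sigma \<Rightarrow> real) \<Rightarrow> nat \<Rightarrow> real" where
  "var H n = (SUP p \<in> {(x, y). \<forall>i<n. x i = y i}. \<bar>H (fst p) - H (snd p)\<bar>)"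

definition prep :: "bool \<Rightarrow> sigma \<Rightarrow> sigma" where
  "prep a x = case_nat a x"

definition transfer :: "real \<Rightarrow> (sigma \<Rightarrow> real) \<Rightarrow> (sigma \<Rightarrow> real) \<Rightarrow> sigma \<Rightarrow> real" where
  "transfer \<beta> H \<Phi> x =
     exp (- \<beta> * H (prep False x)) * \<Phi> (prep False x)
   + exp (- \<beta> * H (prep True x)) * \<Phi> (prep True x)"

text \<open>Reduced double-well type potential; H0 n = H_n^0 (value on [0 1^n 0]),
  H1 n = H_n^1 (value on [1 0^n 1]), n \<ge> 1.\<close>
definition reduced_double_well :: "(sigma \<Rightarrow> real) \<Rightarrow> (nat \<Rightarrow> real) \<Rightarrow> (nat \<Rightarrow> real) \<Rightarrow> bool" where
  "reduced_double_well H H0 H1 \<longleftrightarrow>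
     continuous_map SigmaT euclideanreal H \<and>
     (\<forall>x. 0 \<le> H x) \<and>
     summable (var H) \<and>
     (\<forall>x. x 0 = x 1 \<longrightarrow> H x = 0) \<and>
     (\<forall>n\<ge>1. 0 < H0 n \<and> (\<forall>x\<in>cyl ([False] @ replicate n True @ [False]). H x = H0 n)) \<and>
     (\<forall>n\<ge>1. 0 < H1 n \<and> (\<forall>x\<in>cyl ([True] @ replicate n False @ [True]). H x = H1 n)) \<and>
     summable (\<lambda>k. SUP n. \<bar>H0 (Suc k) - H0 (Suc k + n)\<bar>) \<and>
     summable (\<lambda>k. SUP n. \<bar>H1 (Suc k) - H1 (Suc k + n)\<bar>)"

definition Fsum :: "real \<Rightarrow> (nat \<Rightarrow> real) \<Rightarrow> real \<Rightarrow> real" where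
  "Fsum \<beta> Hi lam = (\<Sum>k. exp (- \<beta> * Hi (Suc k)) / lam ^ Suc k)"

definition Ftilde :: "real \<Rightarrow> (nat \<Rightarrow> real) \<Rightarrow> real \<Rightarrow> real" where
  "Ftilde \<beta> Hi lam = (\<Sum>k. real (Suc k) * exp (- \<beta> * Hi (Suc k)) / lam ^ Suc k)"

definition Ftail :: "real \<Rightarrow> (nat \<Rightarrow> real) \<Rightarrow> real \<Rightarrow> nat \<Rightarrow> real" where
  "Ftail \<beta> Hi lam n = (\<Sum>k. exp (- \<beta> * Hi (k + n)) / lam ^ (k + n))"

definition gibbs :: "sigma measure \<Rightarrow> (sigma \<Rightarrow> real) \<Rightarrow> sigma measure" where
  "gibbs \<nu> \<Phi> = density \<nu> (\<lambda>x. ennreal (\<Phi> x / (\<integral>y. \<Phi> y \<partial>\<nu>)))"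

end

theory Submission
  imports Defs
begin


instance bool :: second_countable_topology
proof
  show "\<exists>B::bool set set. countable B \<and> open = generate_topology B"
    apply (rule exI[of _ UNIV])
    apply (auto simp: fun_eq_iff Topological_Spaces.open_discrete intro: generate_topology.Basis)
    done
qed

lemma euclidean_bool: "(euclidean :: bool topology) = discrete_topology UNIV"
  by (simp add: topology_eq open_openin[symmetric] Topological_Spaces.open_discrete)

lemma SigmaT_eucl: "SigmaT = euclidean"
  unfolding SigmaT_def euclidean_bool[symmetric] by (rule euclidean_product_topology)

lemma sets_SigmaM: "sets SigmaM = sets (borel :: sigma measure)"
proof -
  have "sets (borel::bool measure) = sets (count_space UNIV)"
    by (auto simp: sets_borel intro: sigma_sets.Basic Topological_Spaces.open_discrete)
  then have "sets SigmaM = sets (\<Pi>\<^sub>M i\<in>(UNIV::nat set). (borel::bool measure))"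
    unfolding SigmaM_def by (intro sets_PiM_cong) auto
  also have "\<dots> = sets borel" by (rule sets_PiM_equal_borel)
  finally show ?thesis .
qed

lemma cont_meas:
  assumes "continuous_map SigmaT euclideanreal f" "sets M = sets SigmaM"
  shows "f \<in> borel_measurable M"
proof -
  have "continuous_on UNIV f" using assms(1) by (simp add: SigmaT_eucl)
  then have "f \<in> borel_measurable borel" by (rule borel_measurable_continuous_onI)
  moreover have "sets M = sets (borel :: sigma measure)" using assms(2) sets_SigmaM by simp
  ultimately show ?thesis using measurable_cong_sets[of M borel borel borel] by simp
qed




lemma compact_sigma: "compact (UNIV :: sigma set)"
proof -
  have "compact_space SigmaT"
    unfolding SigmaT_def compact_space_product_topology
    by (simp add: compact_space_discrete_topology)
  then show ?thesis unfolding SigmaT_eucl compact_space_def by simp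
qed

lemma open_cylN: "open {x::sigma. \<forall>i<N. x i = z i}"
proof -
  have "open {f::sigma. \<forall>i\<in>{..<N}. f (id i) \<in> {z i}}"
    by (rule product_topology_basis') (auto simp: Topological_Spaces.open_discrete)
  moreover have "{f::sigma. \<forall>i\<in>{..<N}. f (id i) \<in> {z i}} = {x. \<forall>i<N. x i = z i}" by auto
  ultimately show ?thesis by simp
qed

lemma open_contains_cyl:
  assumes "open (S::sigma set)" "z \<in> S"
  shows "\<exists>N. {x. \<forall>i<N. x i = z i} \<subseteq> S"
proof -
  have "openin (product_topology (\<lambda>_. discrete_topology (UNIV::bool set)) (UNIV::nat set)) S"
    using assms(1) by (simp add: SigmaT_eucl[unfolded SigmaT_def])
  from product_topology_open_contains_basis[OF this assms(2)]
  obtain X where X: "z \<in> (\<Pi>\<^sub>E i\<in>UNIV. X i)"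
      "finite {i. X i \<noteq> topspace (discrete_topology (UNIV::bool set))}"
      "(\<Pi>\<^sub>E i\<in>UNIV. X i) \<subseteq> S" by blast
  have X2: "finite {i. X i \<noteq> UNIV}" using X(2) by (simp only: topspace_discrete_topology)
  obtain N where N0: "{i. X i \<noteq> UNIV} \<subseteq> {..<N}"
    using finite_nat_bounded[OF X2] by (elim exE)
  have N: "\<forall>i\<in>{i. X i \<noteq> UNIV}. i < N" using N0 by (simp only: subset_iff lessThan_iff Ball_def)
  have "{x. \<forall>i<N. x i = z i} \<subseteq> (\<Pi>\<^sub>E i\<in>UNIV. X i)"
  proof
    fix x assume x: "x \<in> {x. \<forall>i<N. x i = z i}"
    have "x i \<in> X i" for i
    proof (cases "X i = UNIV")
      case False then have "i < N" using N by blast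
      then have "x i = z i" using x by blast
      moreover have "z i \<in> X i" using PiE_mem[OF X(1)] by blast
      ultimately show ?thesis by (rule ssubst)
    next
      case True then show ?thesis by (rule ssubst) (rule UNIV_I)
    qed
    then have "x \<in> Pi UNIV X" by (rule Pi_I)
    then show "x \<in> (\<Pi>\<^sub>E i\<in>UNIV. X i)" by (simp only: PiE_UNIV_domain)
  qed
  then have "{x. \<forall>i<N. x i = z i} \<subseteq> S" using X(3) by (rule subset_trans)
  then show ?thesis by (rule exI)
qed

lemma unif_cont:
  assumes "continuous_map SigmaT euclideanreal f" "e > 0"
  shows "\<exists>N. \<forall>u v. (\<forall>i<N. u i = v i) \<longrightarrow> \<bar>f u - f v\<bar> < e"
proof -
  have cf: "continuous_on UNIV f" using assms(1) by (simp add: SigmaT_eucl)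
  have ex: "\<forall>z. \<exists>N. \<forall>x. (\<forall>i<N. x i = z i) \<longrightarrow> \<bar>f x - f z\<bar> < e/2"
  proof
    fix z :: sigma
    have o: "open (f -` ball (f z) (e/2))"
      by (rule open_vimage[OF open_ball cf])
    have zin: "z \<in> f -` ball (f z) (e/2)" using assms(2) by simp
    obtain N where Nsub: "{x. \<forall>i<N. x i = z i} \<subseteq> f -` ball (f z) (e/2)"
      using open_contains_cyl[OF o zin] by (rule exE)
    show "\<exists>N. \<forall>x. (\<forall>i<N. x i = z i) \<longrightarrow> \<bar>f x - f z\<bar> < e/2"
    proof (intro exI allI impI)
      fix x :: sigma assume "\<forall>i<N. x i = z i"
      then have "x \<in> {x. \<forall>i<N. x i = z i}" by simp
      then have "x \<in> f -` ball (f z) (e/2)" using Nsub by (rule subsetD[rotated])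
      then show "\<bar>f x - f z\<bar> < e/2" by (simp add: dist_real_def abs_minus_commute)
    qed
  qed
  obtain N where N: "\<forall>z. \<forall>x. (\<forall>i<N z. x i = z i) \<longrightarrow> \<bar>f x - f z\<bar> < e/2"
    using choice[OF ex] by (rule exE)
  have opn: "\<And>T. T \<in> UNIV \<Longrightarrow> open ((\<lambda>z. {x. \<forall>i<N z. x i = z i}) T)"
    by (rule open_cylN)
  have cov: "UNIV \<subseteq> (\<Union>z\<in>UNIV. {x. \<forall>i<N z. x i = z i})"
  proof (rule subsetI)
    fix x :: sigma
    show "x \<in> (\<Union>z\<in>UNIV. {x. \<forall>i<N z. x i = z i})" by (rule UN_I[of x]) simp_all
  qed
  obtain Z where Z0: "Z \<subseteq> UNIV" and Z: "finite Z" "UNIV \<subseteq> (\<Union>z\<in>Z. {x. \<forall>i<N z. x i = z i})"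
    by (rule compactE_image[OF compact_sigma opn cov])
  define M where "M = Max (N ` Z)"
  show ?thesis
  proof (intro exI allI impI)
    fix u v :: sigma assume uv: "\<forall>i<M. u i = v i"
    have "u \<in> (\<Union>z\<in>Z. {x. \<forall>i<N z. x i = z i})" using Z(2) by (rule subsetD) (rule UNIV_I)
    then obtain z where z: "z \<in> Z" "\<forall>i<N z. u i = z i" by (rule UN_E) (rule that, assumption, simp)
    have "N z \<le> M" unfolding M_def using Z(1) z(1) by simp
    then have vz: "\<forall>i<N z. v i = z i" using uv z(2) by (metis order_less_le_trans)
    have "\<bar>f u - f z\<bar> < e/2" using N z(2) by blast
    moreover have "\<bar>f v - f z\<bar> < e/2" using N vz by blast
    ultimately show "\<bar>f u - f v\<bar> < e" by linarith
  qed
qed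




lemma pos_min:
  assumes "continuous_map SigmaT euclideanreal f" "\<forall>x. f x > 0"
  shows "\<exists>c>0. \<forall>x. c \<le> f x"
proof -
  have "compact (f ` UNIV)"
    using assms(1) by (intro compact_continuous_image) (auto simp: SigmaT_eucl compact_sigma)
  then obtain x where "\<forall>y\<in>f ` UNIV. f x \<le> y"
    using compact_attains_inf[of "f ` UNIV"] by blast
  then show ?thesis using assms(2) by (intro exI[of _ "f x"]) auto
qed

lemma prep_cyl: "prep b x \<in> cyl (c # w) \<longleftrightarrow> b = c \<and> x \<in> cyl w"
proof -
  have "(\<forall>i<Suc (length w). P i) \<longleftrightarrow> P 0 \<and> (\<forall>i<length w. P (Suc i))" for P
    using less_Suc_eq_0_disj by auto
  then show ?thesis unfolding cyl_def prep_def by auto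
qed

definition cls :: "bool \<Rightarrow> nat \<Rightarrow> sigma set" where
  "cls a m = cyl (replicate m a @ [\<not> a])"

lemma prep_cls_same: "m \<ge> 1 \<Longrightarrow> x \<in> cls a m \<Longrightarrow> prep a x \<in> cls a (Suc m)"
  unfolding cls_def by (simp add: prep_cyl)

lemma prep_cls_other: "m \<ge> 1 \<Longrightarrow> x \<in> cls a m \<Longrightarrow> prep (\<not>a) x \<in> cls (\<not>a) 1"
  unfolding cls_def using prep_cyl[of "\<not>a" x "\<not>a" "[a]"]
  by (cases m) (auto simp: cyl_def)

lemma prep_0: "prep a x 0 = a" and prep_Suc: "prep a x (Suc i) = x i"
  by (auto simp: prep_def)




locale dw =
  fixes H :: "sigma \<Rightarrow> real" and H0 H1 :: "nat \<Rightarrow> real"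
    and \<beta> lam :: real and \<Phi> :: "sigma \<Rightarrow> real" and \<nu> :: "sigma measure"
  assumes pot: "reduced_double_well H H0 H1"
    and beta: "\<beta> > 0"
    and Phi_cont: "continuous_map SigmaT euclideanreal \<Phi>"
    and Phi_pos: "\<forall>x. \<Phi> x > 0"
    and Phi_max: "(\<forall>x. \<Phi> x \<le> 1) \<and> (\<exists>x. \<Phi> x = 1)"
    and Phi_eig: "transfer \<beta> H \<Phi> = (\<lambda>x. lam * \<Phi> x)"
    and nu_prob: "prob_space \<nu>"
    and nu_sets: "sets \<nu> = sets SigmaM"
    and nu_eig: "\<forall>f. continuous_map SigmaT euclideanreal f \<longrightarrow>
                   (\<integral>x. transfer \<beta> H f x \<partial>\<nu>) = lam * (\<integral>x. f x \<partial>\<nu>)"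

context dw
begin

definition Hc :: "bool \<Rightarrow> nat \<Rightarrow> real" where "Hc a m = (if a then H0 m else H1 m)"

lemma H_nonneg: "H x \<ge> 0" using pot unfolding reduced_double_well_def by auto

lemma H_prep_same: "x 0 = a \<Longrightarrow> H (prep a x) = 0"
  using pot unfolding reduced_double_well_def by (auto simp: prep_0 prep_Suc)

lemma H_prep_other: assumes "m \<ge> 1" "x \<in> cls a m" shows "H (prep (\<not>a) x) = Hc a m"
proof -
  have "prep (\<not>a) x \<in> cyl ([\<not>a] @ replicate m a @ [\<not>a])"
    using assms(2) unfolding cls_def by (simp add: prep_cyl)
  then show ?thesis using pot assms(1) unfolding reduced_double_well_def Hc_def
    by (cases a) auto
qed

lemma Hc_pos: "m \<ge> 1 \<Longrightarrow> Hc a m > 0"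
  using pot unfolding reduced_double_well_def Hc_def by auto

lemma eig_pt: "lam * \<Phi> x = exp (- \<beta> * H (prep a x)) * \<Phi> (prep a x)
     + exp (- \<beta> * H (prep (\<not>a) x)) * \<Phi> (prep (\<not>a) x)"
proof -
  have "transfer \<beta> H \<Phi> x = lam * \<Phi> x" using Phi_eig by simp
  then show ?thesis unfolding transfer_def by (cases a) auto
qed

lemma lam_gt1: "lam > 1"
proof -
  define z :: sigma where "z = (\<lambda>_. False)"
  have pz: "prep False z = z" by (auto simp: z_def prep_def fun_eq_iff split: nat.split)
  have "H (prep False z) = 0" by (rule H_prep_same) (simp add: z_def)
  then have "lam * \<Phi> z = \<Phi> z + exp (- \<beta> * H (prep True z)) * \<Phi> (prep True z)"
    using eig_pt[of z False] pz by simp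
  moreover have "exp (- \<beta> * H (prep True z)) * \<Phi> (prep True z) > 0" using Phi_pos by simp
  ultimately have "lam * \<Phi> z > 1 * \<Phi> z" by simp
  then show ?thesis using Phi_pos by (meson mult_less_cancel_right_pos)
qed

definition E :: "sigma \<Rightarrow> sigma \<Rightarrow> bool" where
  "E u v \<longleftrightarrow> (\<exists>a m. m \<ge> 1 \<and> u \<in> cls a m \<and> v \<in> cls a m)"

lemma E_prep: assumes "E u v" shows "E (prep b u) (prep b v) \<and> H (prep b u) = H (prep b v)"
proof -
  obtain a m where am: "m \<ge> 1" "u \<in> cls a m" "v \<in> cls a m" using assms unfolding E_def by blast
  have u0: "u 0 = a" "v 0 = a" using am unfolding cls_def cyl_def by (cases m; auto)+
  show ?thesis
  proof (cases "b = a")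
    case True
    have "E (prep b u) (prep b v)" unfolding E_def
      using True am prep_cls_same[of m u a] prep_cls_same[of m v a]
      by (intro exI[of _ a] exI[of _ "Suc m"]) auto
    then show ?thesis using True H_prep_same[of u a] H_prep_same[of v a] u0 by simp
  next
    case False
    then have b: "b = (\<not>a)" by auto
    have "E (prep b u) (prep b v)" unfolding E_def b
      using am prep_cls_other[of m u a] prep_cls_other[of m v a]
      by (intro exI[of _ "\<not>a"] exI[of _ 1]) auto
    then show ?thesis using H_prep_other[of m u a] H_prep_other[of m v a] am b by simp
  qed
qed

lemma class_const: assumes "E x y" shows "\<Phi> x = \<Phi> y"
proof (rule ccontr)
  assume ne: "\<Phi> x \<noteq> \<Phi> y"
  define R where "R = \<bar>\<Phi> x - \<Phi> y\<bar> / \<Phi> x"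
  have R: "R > 0" using ne Phi_pos unfolding R_def by simp
  have lam0: "lam > 0" using lam_gt1 by simp
  have key: "\<exists>u v. E u v \<and> (\<forall>i<n. u i = v i) \<and> \<bar>\<Phi> u - \<Phi> v\<bar> \<ge> R * \<Phi> u" for n
  proof (induction n)
    case 0
    show ?case using assms Phi_pos unfolding R_def by (intro exI[of _ x] exI[of _ y]) simp
  next
    case (Suc n)
    then obtain u v where uv: "E u v" "\<forall>i<n. u i = v i" "\<bar>\<Phi> u - \<Phi> v\<bar> \<ge> R * \<Phi> u" by blast
    have agree: "\<forall>i<Suc n. prep b u i = prep b v i" for b
      using uv(2) by (auto simp: prep_def less_Suc_eq_0_disj)
    show ?case
    proof (rule ccontr)
      assume "\<not> ?case"
      then have lt: "\<bar>\<Phi> (prep b u) - \<Phi> (prep b v)\<bar> < R * \<Phi> (prep b u)" for b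
      proof -
        have "\<not> (E (prep b u) (prep b v) \<and> (\<forall>i<Suc n. prep b u i = prep b v i)
             \<and> \<bar>\<Phi> (prep b u) - \<Phi> (prep b v)\<bar> \<ge> R * \<Phi> (prep b u))"
          using \<open>\<not> ?case\<close> by blast
        then show ?thesis using E_prep[OF uv(1), of b] agree[of b] by (simp add: not_le)
      qed
      define w where "w b = exp (- \<beta> * H (prep b u))" for b
      have wv: "exp (- \<beta> * H (prep b v)) = w b" for b using E_prep[OF uv(1), of b] w_def by simp
      have eu: "lam * \<Phi> u = w False * \<Phi> (prep False u) + w True * \<Phi> (prep True u)"
        using eig_pt[of u False] w_def by simp
      have ev: "lam * \<Phi> v = w False * \<Phi> (prep False v) + w True * \<Phi> (prep True v)"
        using eig_pt[of v False] wv by simp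
      have "lam * \<bar>\<Phi> u - \<Phi> v\<bar> = \<bar>lam * \<Phi> u - lam * \<Phi> v\<bar>"
        using lam0 by (simp add: right_diff_distrib[symmetric] abs_mult)
      also have "\<dots> = \<bar>w False * (\<Phi> (prep False u) - \<Phi> (prep False v))
            + w True * (\<Phi> (prep True u) - \<Phi> (prep True v))\<bar>"
        unfolding eu ev by (simp add: algebra_simps)
      also have "\<dots> \<le> w False * \<bar>\<Phi> (prep False u) - \<Phi> (prep False v)\<bar>
            + w True * \<bar>\<Phi> (prep True u) - \<Phi> (prep True v)\<bar>"
        by (rule order_trans[OF abs_triangle_ineq]) (simp add: abs_mult w_def)
      also have "\<dots> < w False * (R * \<Phi> (prep False u)) + w True * (R * \<Phi> (prep True u))"
        by (intro add_strict_mono mult_strict_left_mono lt) (auto simp: w_def)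
      also have "\<dots> = R * (lam * \<Phi> u)" using eu by (simp add: algebra_simps)
      finally have "lam * \<bar>\<Phi> u - \<Phi> v\<bar> < lam * (R * \<Phi> u)" by (simp add: mult.left_commute)
      then have "\<bar>\<Phi> u - \<Phi> v\<bar> < R * \<Phi> u" using lam0 by simp
      then show False using uv(3) by simp
    qed
  qed
  obtain c where c: "c > 0" "\<forall>x. c \<le> \<Phi> x" using pos_min[OF Phi_cont] Phi_pos by blast
  obtain N where N: "\<forall>u v. (\<forall>i<N. u i = v i) \<longrightarrow> \<bar>\<Phi> u - \<Phi> v\<bar> < R * c"
    using unif_cont[OF Phi_cont, of "R * c"] R c by auto
  obtain u v where uv: "(\<forall>i<N. u i = v i)" "\<bar>\<Phi> u - \<Phi> v\<bar> \<ge> R * \<Phi> u" using key by blast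
  have "R * c \<le> R * \<Phi> u" using R c by simp
  moreover have "\<bar>\<Phi> u - \<Phi> v\<bar> < R * c" using mp[OF spec[OF spec[OF N, of u], of v] uv(1)] .
  ultimately show False using uv(2) by linarith
qed

end



lemma term_bound:
  fixes \<beta> lam :: real and h :: "nat \<Rightarrow> real"
  assumes "\<beta> \<ge> 0" "lam > 1" "h m \<ge> 0"
  shows "0 \<le> exp (- \<beta> * h m) / lam ^ m" "exp (- \<beta> * h m) / lam ^ m \<le> (1/lam) ^ m"
proof -
  have "\<beta> * h m \<ge> 0" using assms by (simp add: mult_nonneg_nonneg)
  then have e: "exp (- \<beta> * h m) \<le> 1" by simp
  have l: "lam ^ m > 0" using assms by simp
  show "0 \<le> exp (- \<beta> * h m) / lam ^ m" using l by simp
  show "exp (- \<beta> * h m) / lam ^ m \<le> (1/lam) ^ m"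
    using e l by (simp add: power_one_over divide_right_mono)
qed

context
  fixes \<beta> lam :: real and h :: "nat \<Rightarrow> real"
  assumes b: "\<beta> \<ge> 0" and l: "lam > 1" and hpos: "\<And>m. m \<ge> 1 \<Longrightarrow> h m \<ge> 0"
begin

lemma tail_summable: assumes "n \<ge> 1" shows "summable (\<lambda>k. exp (- \<beta> * h (k + n)) / lam ^ (k + n))"
proof (rule summable_comparison_test[of _ "\<lambda>k. (1/lam) ^ n * (1/lam) ^ k"])
  show "summable (\<lambda>k. (1/lam) ^ n * (1/lam) ^ k)"
    using l by (intro summable_mult summable_geometric) simp
  show "\<exists>N. \<forall>k\<ge>N. norm (exp (- \<beta> * h (k + n)) / lam ^ (k + n)) \<le> (1/lam) ^ n * (1/lam) ^ k"
  proof (intro exI allI impI)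
    fix k :: nat
    have hk: "h (k + n) \<ge> 0" using hpos assms by simp
    have "norm (exp (- \<beta> * h (k + n)) / lam ^ (k + n)) = exp (- \<beta> * h (k + n)) / lam ^ (k + n)"
      using term_bound(1)[of \<beta> lam h, OF b l hk] using l by simp
    also have "\<dots> \<le> (1/lam) ^ (k + n)" by (rule term_bound(2)[of \<beta> lam h, OF b l hk])
    also have "\<dots> = (1/lam) ^ n * (1/lam) ^ k" by (simp add: power_add)
    finally show "norm (exp (- \<beta> * h (k + n)) / lam ^ (k + n)) \<le> (1/lam) ^ n * (1/lam) ^ k" .
  qed
qed

lemma tail_step: assumes "n \<ge> 1"
  shows "Ftail \<beta> h lam n = exp (- \<beta> * h n) / lam ^ n + Ftail \<beta> h lam (Suc n)"
proof -
  have "(\<Sum>k. exp (- \<beta> * h (Suc k + n)) / lam ^ (Suc k + n))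
      = (\<Sum>k. exp (- \<beta> * h (k + n)) / lam ^ (k + n)) - exp (- \<beta> * h (0 + n)) / lam ^ (0 + n)"
    by (rule suminf_split_head[OF tail_summable[OF assms]])
  moreover have "(\<lambda>k. exp (- \<beta> * h (Suc k + n)) / lam ^ (Suc k + n))
      = (\<lambda>k. exp (- \<beta> * h (k + Suc n)) / lam ^ (k + Suc n))" by simp
  ultimately show ?thesis unfolding Ftail_def by simp
qed

lemma tail_bound: assumes "n \<ge> 1"
  shows "0 \<le> Ftail \<beta> h lam n" "Ftail \<beta> h lam n \<le> (1/lam) ^ n * (lam / (lam - 1))"
proof -
  have hk: "\<And>k. h (k + n) \<ge> 0" using hpos assms by simp
  show "0 \<le> Ftail \<beta> h lam n" unfolding Ftail_def
    by (rule suminf_nonneg[OF tail_summable[OF assms]]) (rule term_bound(1)[of \<beta> lam h, OF b l hk])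
  have g: "summable (\<lambda>k. (1/lam) ^ n * (1/lam) ^ k)"
    using l by (intro summable_mult summable_geometric) simp
  have "Ftail \<beta> h lam n \<le> (\<Sum>k. (1/lam) ^ n * (1/lam) ^ k)" unfolding Ftail_def
  proof (rule suminf_le[OF _ tail_summable[OF assms] g])
    fix k show "exp (- \<beta> * h (k + n)) / lam ^ (k + n) \<le> (1/lam) ^ n * (1/lam) ^ k"
      using term_bound(2)[of \<beta> lam h, OF b l hk] by (simp add: power_add mult.commute)
  qed
  also have "\<dots> = (1/lam) ^ n * (\<Sum>k. (1/lam) ^ k)" by (rule suminf_mult) (use l in simp)
  also have "(\<Sum>k. (1/lam) ^ k) = lam / (lam - 1)"
    using l by (subst suminf_geometric) (auto simp: field_simps)
  finally show "Ftail \<beta> h lam n \<le> (1/lam) ^ n * (lam / (lam - 1))" .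
qed

lemma Fsum_tail: "Fsum \<beta> h lam = Ftail \<beta> h lam 1"
  unfolding Fsum_def Ftail_def by simp

lemma tail_partial:
  "(\<Sum>k<N. Ftail \<beta> h lam (Suc k))
     = (\<Sum>k<N. real (Suc k) * exp (- \<beta> * h (Suc k)) / lam ^ Suc k) + real N * Ftail \<beta> h lam (Suc N)"
proof (induction N)
  case 0 then show ?case by simp
next
  case (Suc N)
  have st: "Ftail \<beta> h lam (Suc N) = exp (- \<beta> * h (Suc N)) / lam ^ Suc N + Ftail \<beta> h lam (Suc (Suc N))"
    by (rule tail_step) simp
  show ?case using Suc.IH st by (simp add: algebra_simps add_divide_distrib)
qed

lemma tilde_sums: "(\<lambda>k. Ftail \<beta> h lam (Suc k)) sums Ftilde \<beta> h lam"
proof -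
  define C where "C = lam / (lam - 1)"
  have C: "C > 0" using l unfolding C_def by simp
  have q: "norm (1/lam) < 1" using l by simp
  have sm: "summable (\<lambda>k. Ftail \<beta> h lam (Suc k))"
  proof (rule summable_comparison_test[of _ "\<lambda>k. C * (1/lam) ^ Suc k"])
    have "summable (\<lambda>k. (C * (1/lam)) * (1/lam) ^ k)" using summable_geometric[OF q] by (rule summable_mult)
    then show "summable (\<lambda>k. C * (1/lam) ^ Suc k)" by (simp only: power_Suc mult.assoc)
    show "\<exists>N. \<forall>k\<ge>N. norm (Ftail \<beta> h lam (Suc k)) \<le> C * (1/lam) ^ Suc k"
      using tail_bound[of "Suc _"] unfolding C_def by (auto simp: mult.commute)
  qed
  define S where "S = (\<Sum>k. Ftail \<beta> h lam (Suc k))"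
  have ps: "(\<lambda>N. \<Sum>k<N. Ftail \<beta> h lam (Suc k)) \<longlonglongrightarrow> S"
    using sm unfolding S_def by (simp add: summable_LIMSEQ)
  have z: "(\<lambda>N. real N * Ftail \<beta> h lam (Suc N)) \<longlonglongrightarrow> 0"
  proof (rule tendsto_sandwich[of "\<lambda>_. 0" _ _ "\<lambda>N. (C / lam) * (real N * (1/lam) ^ N)"])
    show "\<forall>\<^sub>F N in sequentially. 0 \<le> real N * Ftail \<beta> h lam (Suc N)"
      using tail_bound(1)[of "Suc _"] by simp
    show "\<forall>\<^sub>F N in sequentially. real N * Ftail \<beta> h lam (Suc N) \<le> (C / lam) * (real N * (1/lam) ^ N)"
    proof (rule always_eventually, rule allI)
      fix N
      have "Ftail \<beta> h lam (Suc N) \<le> (1/lam) ^ Suc N * C" using tail_bound(2)[of "Suc N"] unfolding C_def by simp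
      then have "real N * Ftail \<beta> h lam (Suc N) \<le> real N * ((1/lam) ^ Suc N * C)"
        by (rule mult_left_mono) simp
      then show "real N * Ftail \<beta> h lam (Suc N) \<le> (C / lam) * (real N * (1/lam) ^ N)"
        by (simp add: field_simps)
    qed
    show "(\<lambda>_. 0::real) \<longlonglongrightarrow> 0" by simp
    have "(\<lambda>N. real N * (1/lam) ^ N) \<longlonglongrightarrow> 0" using powser_times_n_limit_0[OF q] by simp
    then show "(\<lambda>N. (C / lam) * (real N * (1/lam) ^ N)) \<longlonglongrightarrow> 0"
      by (rule tendsto_mult_right_zero)
  qed
  have "(\<lambda>N. (\<Sum>k<N. Ftail \<beta> h lam (Suc k)) - real N * Ftail \<beta> h lam (Suc N)) \<longlonglongrightarrow> S - 0"
    by (rule tendsto_diff[OF ps z])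
  then have "(\<lambda>N. \<Sum>k<N. real (Suc k) * exp (- \<beta> * h (Suc k)) / lam ^ Suc k) \<longlonglongrightarrow> S"
    by (simp add: tail_partial)
  then have "(\<lambda>k. real (Suc k) * exp (- \<beta> * h (Suc k)) / lam ^ Suc k) sums S"
    by (simp add: sums_def)
  then have "Ftilde \<beta> h lam = S" unfolding Ftilde_def by (rule sums_unique[symmetric])
  then show ?thesis using sm unfolding S_def by (simp add: summable_sums)
qed

lemma tail_pos: assumes "n \<ge> 1" "\<And>m. m \<ge> 1 \<Longrightarrow> h m > 0" shows "Ftail \<beta> h lam n > 0"
proof -
  have "Ftail \<beta> h lam n = exp (- \<beta> * h n) / lam ^ n + Ftail \<beta> h lam (Suc n)"
    by (rule tail_step[OF assms(1)])
  moreover have "exp (- \<beta> * h n) / lam ^ n > 0" using l by simp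
  moreover have "Ftail \<beta> h lam (Suc n) \<ge> 0" by (rule tail_bound(1)) simp
  ultimately show ?thesis by linarith
qed

lemma tilde_pos: "Ftilde \<beta> h lam > 0"
proof -
  have "Ftilde \<beta> h lam = (\<Sum>k. Ftail \<beta> h lam (Suc k))" using tilde_sums by (rule sums_unique)
  also have "\<dots> > 0"
  proof (rule suminf_pos2[OF sums_summable[OF tilde_sums]])
    show "\<And>k. 0 \<le> Ftail \<beta> h lam (Suc k)" by (rule tail_bound(1)) simp
    show "0 < Ftail \<beta> h lam (Suc 0)"
    proof -
      have "Ftail \<beta> h lam 1 = exp (- \<beta> * h 1) / lam ^ 1 + Ftail \<beta> h lam (Suc 1)" by (rule tail_step) simp
      moreover have "Ftail \<beta> h lam (Suc 1) \<ge> 0" by (rule tail_bound(1)) simp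
      moreover have "exp (- \<beta> * h 1) / lam ^ 1 > 0" using l by simp
      ultimately show ?thesis by simp
    qed
  qed
  finally show ?thesis .
qed

end



lemma cyl_snoc: "cyl (w @ [a]) = cyl w \<inter> {x. x (length w) = a}"
  unfolding cyl_def by (auto simp: nth_append less_Suc_eq)

lemma cyl_Nil: "cyl [] = UNIV" unfolding cyl_def by simp

lemma cont_ind: "continuous_map SigmaT euclideanreal (indicator (cyl w))"
proof (induction w rule: rev_induct)
  case Nil
  show ?case by (simp add: cyl_Nil)
next
  case (snoc a w)
  have c1: "continuous_on UNIV (indicator (cyl w) :: sigma \<Rightarrow> real)"
    using snoc.IH by (simp add: SigmaT_eucl)
  have c2: "continuous_on UNIV (\<lambda>x::sigma. (\<lambda>b::bool. if b = a then 1 else (0::real)) (x (length w)))"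
    by (rule continuous_on_compose2[of UNIV _ UNIV]) (auto intro: continuous_on_product_coordinates)
  have eq: "indicator (cyl (w @ [a])) = (\<lambda>x::sigma. indicator (cyl w) x * (if x (length w) = a then 1 else (0::real)))"
    by (rule ext) (simp add: cyl_snoc indicator_def)
  have "continuous_on UNIV (\<lambda>x::sigma. indicator (cyl w) x * (if x (length w) = a then 1 else (0::real)))"
    using c1 c2 by (intro continuous_on_mult) auto
  then show ?case unfolding eq by (simp add: SigmaT_eucl)
qed

lemma cont_mult: "continuous_map SigmaT euclideanreal f \<Longrightarrow> continuous_map SigmaT euclideanreal g
   \<Longrightarrow> continuous_map SigmaT euclideanreal (\<lambda>x. f x * g x)"
  by (simp add: SigmaT_eucl continuous_on_mult)

lemma cont_add: "continuous_map SigmaT euclideanreal f \<Longrightarrow> continuous_map SigmaT euclideanreal g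
   \<Longrightarrow> continuous_map SigmaT euclideanreal (\<lambda>x. f x + g x)"
  by (simp add: SigmaT_eucl continuous_on_add)

context dw
begin

lemma space_nu: "space \<nu> = UNIV"
proof -
  have "space \<nu> = space SigmaM" using nu_sets by (rule sets_eq_imp_space_eq)
  then show ?thesis unfolding SigmaM_def by (simp add: space_PiM)
qed

lemma meas: "continuous_map SigmaT euclideanreal f \<Longrightarrow> f \<in> borel_measurable \<nu>"
  using cont_meas nu_sets by blast

lemma cyl_sets: "cyl w \<in> sets \<nu>"
proof -
  have "(indicator (cyl w) :: sigma \<Rightarrow> real) \<in> borel_measurable \<nu>" by (rule meas[OF cont_ind])
  then show ?thesis using space_nu by (simp add: borel_measurable_indicator_iff)
qed

lemma integ: assumes "continuous_map SigmaT euclideanreal f" "\<And>x. \<bar>f x\<bar> \<le> B"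
  shows "integrable \<nu> f"
proof -
  interpret prob_space \<nu> by (rule nu_prob)
  show ?thesis by (rule integrable_const_bound[where B=B]) (use assms meas in auto)
qed

lemma Phi_le1: "\<Phi> x \<le> 1" using Phi_max by auto

definition I :: "bool list \<Rightarrow> real" where "I w = (\<integral>x. indicator (cyl w) x * \<Phi> x \<partial>\<nu>)"
definition Nu :: "bool list \<Rightarrow> real" where "Nu w = measure \<nu> (cyl w)"
definition Z :: real where "Z = (\<integral>x. \<Phi> x \<partial>\<nu>)"

lemma cont_indPhi: "continuous_map SigmaT euclideanreal (\<lambda>x. indicator (cyl w) x * \<Phi> x)"
  by (rule cont_mult[OF cont_ind Phi_cont])

lemma integ_indPhi: "integrable \<nu> (\<lambda>x. indicator (cyl w) x * \<Phi> x)"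
  by (rule integ[OF cont_indPhi, where B=1]) (use Phi_pos Phi_le1 in \<open>simp add: indicator_def abs_le_iff less_imp_le\<close>)

lemma integ_ind: "integrable \<nu> (indicator (cyl w) :: sigma \<Rightarrow> real)"
  by (rule integ[OF cont_ind, where B=1]) (simp add: indicator_def)

lemma Nu_int: "Nu w = (\<integral>x. indicator (cyl w) x \<partial>\<nu>)"
  unfolding Nu_def using space_nu by simp

lemma I_nonneg: "I w \<ge> 0"
  unfolding I_def by (rule Bochner_Integration.integral_nonneg) (use Phi_pos in \<open>simp add: less_imp_le\<close>)

lemma Z_pos: "Z > 0"
proof -
  interpret prob_space \<nu> by (rule nu_prob)
  obtain c where c: "c > 0" "\<forall>x. c \<le> \<Phi> x" using pos_min[OF Phi_cont] Phi_pos by blast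
  have "(\<integral>x. c \<partial>\<nu>) \<le> Z" unfolding Z_def
    by (rule Bochner_Integration.integral_mono) (use c integ[OF Phi_cont, of 1] Phi_pos Phi_le1 in \<open>auto simp: abs_le_iff less_imp_le\<close>)
  then show ?thesis using c by (simp add: prob_space)
qed

lemma m_eq: "measure (gibbs \<nu> \<Phi>) (cyl w) = I w / Z"
proof -
  have pm: "\<Phi> \<in> borel_measurable \<nu>" by (rule meas[OF Phi_cont])
  have fm: "(\<lambda>x. ennreal (\<Phi> x / Z)) \<in> borel_measurable \<nu>" using pm by measurable
  have "emeasure (gibbs \<nu> \<Phi>) (cyl w) = (\<integral>\<^sup>+ x. ennreal (\<Phi> x / Z) * indicator (cyl w) x \<partial>\<nu>)"
    unfolding gibbs_def Z_def[symmetric] by (rule emeasure_density[OF fm cyl_sets])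
  also have "\<dots> = (\<integral>\<^sup>+ x. ennreal (indicator (cyl w) x * \<Phi> x / Z) \<partial>\<nu>)"
    by (rule nn_integral_cong) (simp add: indicator_def)
  finally have e: "measure (gibbs \<nu> \<Phi>) (cyl w) = enn2real (\<integral>\<^sup>+ x. ennreal (indicator (cyl w) x * \<Phi> x / Z) \<partial>\<nu>)"
    by (simp add: measure_def)
  have "(\<integral>x. indicator (cyl w) x * \<Phi> x / Z \<partial>\<nu>) = enn2real (\<integral>\<^sup>+ x. ennreal (indicator (cyl w) x * \<Phi> x / Z) \<partial>\<nu>)"
  proof (rule integral_eq_nn_integral)
    show "(\<lambda>x. indicator (cyl w) x * \<Phi> x / Z) \<in> borel_measurable \<nu>"
      using meas[OF cont_indPhi] by measurable
    show "AE x in \<nu>. 0 \<le> indicator (cyl w) x * \<Phi> x / Z"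
      using Phi_pos Z_pos by (auto simp: indicator_def less_imp_le)
  qed
  then show ?thesis using e unfolding I_def by simp
qed

end



context dw
begin

lemma nu_step: assumes "\<forall>x\<in>cyl w. H (prep a x) = c"
  shows "lam * Nu (a # w) = exp (- \<beta> * c) * Nu w"
proof -
  have tr: "transfer \<beta> H (indicator (cyl (a # w)) :: sigma \<Rightarrow> real) = (\<lambda>x. exp (- \<beta> * c) * indicator (cyl w) x)"
  proof (rule ext)
    fix x
    show "transfer \<beta> H (indicator (cyl (a # w))) x = exp (- \<beta> * c) * indicator (cyl w) x"
      unfolding transfer_def using prep_cyl[of False x a w] prep_cyl[of True x a w] assms
      by (cases a; cases "x \<in> cyl w") (auto simp: indicator_def)
  qed
  have "(\<integral>x. transfer \<beta> H (indicator (cyl (a # w)) :: sigma \<Rightarrow> real) x \<partial>\<nu>)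
      = lam * (\<integral>x. (indicator (cyl (a # w)) :: sigma \<Rightarrow> real) x \<partial>\<nu>)"
    using nu_eig cont_ind by blast
  then show ?thesis by (simp add: tr Nu_int)
qed

lemma inv: "I (False # w) + I (True # w) = I w"
proof -
  define f where "f x = (indicator (cyl (False # w)) x + indicator (cyl (True # w)) x) * \<Phi> x" for x
  have cf: "continuous_map SigmaT euclideanreal f"
    unfolding f_def by (intro cont_mult cont_add cont_ind Phi_cont)
  have tr: "transfer \<beta> H f = (\<lambda>x. lam * (indicator (cyl w) x * \<Phi> x))"
  proof (rule ext)
    fix x
    show "transfer \<beta> H f x = lam * (indicator (cyl w) x * \<Phi> x)"
      unfolding transfer_def f_def using prep_cyl[of False x False w] prep_cyl[of True x False w]
        prep_cyl[of False x True w] prep_cyl[of True x True w] eig_pt[of x False]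
      by (cases "x \<in> cyl w") (auto simp: indicator_def)
  qed
  have "(\<integral>x. transfer \<beta> H f x \<partial>\<nu>) = lam * (\<integral>x. f x \<partial>\<nu>)" using nu_eig cf by blast
  then have "lam * I w = lam * (\<integral>x. f x \<partial>\<nu>)" unfolding tr I_def by simp
  moreover have "(\<integral>x. f x \<partial>\<nu>) = I (False # w) + I (True # w)"
    unfolding f_def I_def distrib_right
    by (rule Bochner_Integration.integral_add[OF integ_indPhi integ_indPhi])
  ultimately show ?thesis using lam_gt1 by simp
qed

lemma ind_split: "(indicator (cyl w) x :: real) = indicator (cyl (w @ [False])) x + indicator (cyl (w @ [True])) x"
  by (cases "x (length w)") (auto simp: cyl_snoc indicator_def)

lemma I_add: "I w = I (w @ [False]) + I (w @ [True])"
proof -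
  have "I w = (\<integral>x. indicator (cyl (w @ [False])) x * \<Phi> x + indicator (cyl (w @ [True])) x * \<Phi> x \<partial>\<nu>)"
    unfolding I_def by (simp add: ind_split[of w] distrib_right)
  also have "\<dots> = I (w @ [False]) + I (w @ [True])"
    unfolding I_def by (rule Bochner_Integration.integral_add[OF integ_indPhi integ_indPhi])
  finally show ?thesis .
qed

lemma Nu_add: "Nu w = Nu (w @ [False]) + Nu (w @ [True])"
proof -
  have "Nu w = (\<integral>x. indicator (cyl (w @ [False])) x + indicator (cyl (w @ [True])) x \<partial>\<nu>)"
    unfolding Nu_int by (rule Bochner_Integration.integral_cong[OF refl]) (rule ind_split)
  also have "\<dots> = Nu (w @ [False]) + Nu (w @ [True])"
    unfolding Nu_int by (rule Bochner_Integration.integral_add[OF integ_ind integ_ind])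
  finally show ?thesis .
qed

lemma Nu_nonneg: "Nu w \<ge> 0" unfolding Nu_def by simp

lemma Nu_mono: "cyl v \<subseteq> cyl w \<Longrightarrow> Nu v \<le> Nu w"
proof -
  interpret prob_space \<nu> by (rule nu_prob)
  assume "cyl v \<subseteq> cyl w" then show ?thesis unfolding Nu_def using cyl_sets by (intro finite_measure_mono) auto
qed

lemma Nu_Nil: "Nu [] = 1"
proof -
  interpret prob_space \<nu> by (rule nu_prob)
  show ?thesis unfolding Nu_def cyl_Nil using space_nu prob_space by simp
qed

definition pt :: "bool \<Rightarrow> nat \<Rightarrow> sigma" where "pt a m = (\<lambda>i. if i < m then a else \<not>a)"
definition V :: "bool \<Rightarrow> nat \<Rightarrow> real" where "V a m = \<Phi> (pt a m)"

lemma pt_cls: "pt a m \<in> cls a m"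
  unfolding cls_def cyl_def pt_def by (auto simp: nth_append less_Suc_eq)

lemma Phi_cls: "m \<ge> 1 \<Longrightarrow> x \<in> cls a m \<Longrightarrow> \<Phi> x = V a m"
  unfolding V_def using class_const[of x "pt a m"] pt_cls unfolding E_def by blast

lemma I_cls: assumes "m \<ge> 1" "cyl w \<subseteq> cls a m" shows "I w = V a m * Nu w"
proof -
  have "(\<lambda>x. indicator (cyl w) x * \<Phi> x) = (\<lambda>x. V a m * indicator (cyl w) x)"
  proof (rule ext)
    fix x show "indicator (cyl w) x * \<Phi> x = V a m * indicator (cyl w) x"
      using Phi_cls[OF assms(1), of x] assms(2) by (cases "x \<in> cyl w") auto
  qed
  then show ?thesis unfolding I_def Nu_int by simp
qed

lemma V_pos: "V a m > 0" and V_le1: "V a m \<le> 1"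
  unfolding V_def using Phi_pos Phi_le1 by auto

lemma pt0: "m \<ge> 1 \<Longrightarrow> pt a m 0 = a" unfolding pt_def by simp

lemma V_rec: assumes "m \<ge> 1"
  shows "lam * V a m = V a (Suc m) + exp (- \<beta> * Hc a m) * V (\<not>a) 1"
proof -
  have p1: "prep a (pt a m) \<in> cls a (Suc m)" by (rule prep_cls_same[OF assms pt_cls])
  have p2: "prep (\<not>a) (pt a m) \<in> cls (\<not>a) 1" by (rule prep_cls_other[OF assms pt_cls])
  have h1: "H (prep a (pt a m)) = 0" by (rule H_prep_same[of "pt a m" a, OF pt0[OF assms]])
  have h2: "H (prep (\<not>a) (pt a m)) = Hc a m" by (rule H_prep_other[OF assms pt_cls])
  have "lam * \<Phi> (pt a m) = exp (- \<beta> * H (prep a (pt a m))) * \<Phi> (prep a (pt a m))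
     + exp (- \<beta> * H (prep (\<not>a) (pt a m))) * \<Phi> (prep (\<not>a) (pt a m))" by (rule eig_pt)
  also have "\<Phi> (prep a (pt a m)) = V a (Suc m)" using Phi_cls[OF _ p1] by simp
  also have "\<Phi> (prep (\<not>a) (pt a m)) = V (\<not>a) 1" using Phi_cls[OF _ p2] by simp
  finally show ?thesis unfolding V_def[of a m, symmetric] using h1 h2 by simp
qed

lemma Hc_nonneg: "m \<ge> 1 \<Longrightarrow> Hc a m \<ge> 0" using Hc_pos[of m a] by simp

lemma V_tail: assumes "n \<ge> 1"
  shows "V a n / lam ^ (n - 1) = Ftail \<beta> (Hc a) lam n * V (\<not>a) 1"
proof -
  have l: "lam > 1" by (rule lam_gt1)
  have b: "\<beta> \<ge> 0" using beta by simp
  define g where "g k = V a (Suc k + (n - 1)) / lam ^ (k + (n - 1))" for k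
  have g0: "g \<longlonglongrightarrow> 0"
  proof (rule tendsto_sandwich[of "\<lambda>_. 0" _ _ "\<lambda>k. (1/lam) ^ (k + (n - 1))"])
    show "\<forall>\<^sub>F k in sequentially. 0 \<le> g k" unfolding g_def using V_pos l by (auto intro!: always_eventually less_imp_le)
    show "\<forall>\<^sub>F k in sequentially. g k \<le> (1/lam) ^ (k + (n - 1))"
    proof (rule always_eventually, rule allI)
      fix k
      have "V a (Suc k + (n - 1)) / lam ^ (k + (n - 1)) \<le> 1 / lam ^ (k + (n - 1))"
        using V_le1 l by (intro divide_right_mono) auto
      then show "g k \<le> (1/lam) ^ (k + (n - 1))" unfolding g_def by (simp add: power_one_over)
    qed
    show "(\<lambda>_. 0::real) \<longlonglongrightarrow> 0" by simp
    have "(\<lambda>k. (1/lam) ^ k) \<longlonglongrightarrow> 0" using l by (intro LIMSEQ_realpow_zero) auto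
    then show "(\<lambda>k. (1/lam) ^ (k + (n - 1))) \<longlonglongrightarrow> 0" by (rule LIMSEQ_ignore_initial_segment)
  qed
  have "(\<lambda>k. g (Suc k) - g k) sums (0 - g 0)" by (rule telescope_sums[OF g0])
  then have s1: "(\<lambda>k. g k - g (Suc k)) sums g 0" using sums_minus by fastforce
  have diff: "g k - g (Suc k) = exp (- \<beta> * Hc a (k + n)) / lam ^ (k + n) * V (\<not>a) 1" for k
  proof -
    have kn: "Suc k + (n - 1) = k + n" "Suc (Suc k + (n - 1)) = Suc (k + n)" "Suc k + (n - 1) \<ge> 1"
      using assms by auto
    have r: "lam * V a (k + n) = V a (Suc (k + n)) + exp (- \<beta> * Hc a (k + n)) * V (\<not>a) 1"
      using V_rec[of "k + n" a] assms by simp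
    have "g k - g (Suc k) = V a (k + n) / lam ^ (k + n - 1) - V a (Suc (k + n)) / lam ^ (k + n)"
      unfolding g_def using kn assms by (simp add: add.commute)
    also have "V a (Suc (k + n)) = lam * V a (k + n) - exp (- \<beta> * Hc a (k + n)) * V (\<not>a) 1"
      using r by simp
    finally have gd: "g k - g (Suc k) = V a (k + n) / lam ^ (k + n - 1)
        - (lam * V a (k + n) - exp (- \<beta> * Hc a (k + n)) * V (\<not>a) 1) / lam ^ (k + n)" .
    have P: "lam ^ (k + n) = lam * lam ^ (k + n - 1)"
      using assms by (simp add: power_Suc[symmetric])
    have P0: "lam ^ (k + n - 1) > 0" using l by simp
    show ?thesis unfolding gd P using l P0 by (simp add: field_simps)
  qed
  have s2: "(\<lambda>k. exp (- \<beta> * Hc a (k + n)) / lam ^ (k + n) * V (\<not>a) 1) sums (Ftail \<beta> (Hc a) lam n * V (\<not>a) 1)"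
    unfolding Ftail_def
    by (rule sums_mult2[OF summable_sums[OF tail_summable[OF b l Hc_nonneg assms]]])
  have "g 0 = Ftail \<beta> (Hc a) lam n * V (\<not>a) 1"
    using sums_unique2[OF s1[unfolded diff] s2] .
  moreover have "g 0 = V a n / lam ^ (n - 1)" unfolding g_def using assms by simp
  ultimately show ?thesis by simp
qed

end



lemma cyl_x0: "x \<in> cyl (b # w) \<Longrightarrow> x 0 = b" unfolding cyl_def by auto

lemma cyl_prefix: "cyl (v @ u) \<subseteq> cyl v" unfolding cyl_def by (auto simp: nth_append)

context dw
begin

lemma H_cyl: "\<forall>x\<in>cyl (a # w). H (prep a x) = 0"
proof
  fix x assume "x \<in> cyl (a # w)"
  then have "x 0 = a" by (rule cyl_x0)
  then show "H (prep a x) = 0" by (rule H_prep_same)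
qed

lemma Hc_F: "Hc False = H1" and Hc_T: "Hc True = H0" by (auto simp: Hc_def fun_eq_iff)

lemma Nu_cw: "Nu (replicate (Suc k) a @ [\<not>a]) = Nu [a, \<not>a] / lam ^ k"
proof (induction k)
  case 0 then show ?case by simp
next
  case (Suc k)
  have "\<forall>x\<in>cyl (replicate (Suc k) a @ [\<not>a]). H (prep a x) = 0"
    using H_cyl[of a "replicate k a @ [\<not>a]"] by simp
  then have "lam * Nu (a # (replicate (Suc k) a @ [\<not>a])) = exp (- \<beta> * 0) * Nu (replicate (Suc k) a @ [\<not>a])"
    by (rule nu_step)
  then have "lam * Nu (replicate (Suc (Suc k)) a @ [\<not>a]) = Nu [a, \<not>a] / lam ^ k"
    using Suc.IH by simp
  then show ?case using lam_gt1 by (simp add: field_simps)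
qed

lemma Nu_sw: assumes "n \<ge> 1"
  shows "lam * Nu ((\<not>a) # (replicate n a @ [\<not>a])) = exp (- \<beta> * Hc a n) * Nu (replicate n a @ [\<not>a])"
proof (rule nu_step)
  show "\<forall>x\<in>cyl (replicate n a @ [\<not> a]). H (prep (\<not> a) x) = Hc a n"
    using H_prep_other[OF assms] unfolding cls_def by blast
qed

lemma Nu_a: "lam * Nu [a, a] = Nu [a]"
proof -
  have "\<forall>x\<in>cyl [a]. H (prep a x) = 0" using H_cyl[of a "[]"] by simp
  then have "lam * Nu (a # [a]) = exp (- \<beta> * 0) * Nu [a]" by (rule nu_step)
  then show ?thesis by simp
qed

lemma Nu_a2: "Nu [a] = Nu [a, a] + Nu [a, \<not>a]"
  using Nu_add[of "[a]"] by (cases a) auto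

lemma Nu_01: "Nu [False] + Nu [True] = 1"
  using Nu_add[of "[]"] Nu_Nil by simp

lemma Nu_switch: "Nu [a, \<not>a] = Nu [a] * (1 - 1 / lam)"
proof -
  have e1: "Nu [a, a] = Nu [a] / lam" using Nu_a[of a] lam_gt1 by (simp add: field_simps)
  have e2: "Nu [a, \<not>a] = Nu [a] - Nu [a, a]" using Nu_a2[of a] by simp
  show ?thesis unfolding e2 e1 by (simp add: algebra_simps)
qed

lemma N1_pos: "Nu [a, \<not>a] > 0"
proof (rule ccontr)
  assume "\<not> ?thesis"
  then have z: "Nu [a, \<not>a] = 0" using Nu_nonneg[of "[a, \<not>a]"] by simp
  have l: "lam > 1" by (rule lam_gt1)
  have "Nu [a] = 0" using Nu_switch[of a] z l by simp
  then have na: "Nu [\<not>a] = 1" using Nu_01 by (cases a) auto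
  have p: "Nu [\<not>a, a] > 0" using Nu_switch[of "\<not>a"] na l by simp
  have "lam * Nu ((\<not>\<not>a) # (replicate 1 (\<not>a) @ [\<not>\<not>a])) = exp (- \<beta> * Hc (\<not>a) 1) * Nu (replicate 1 (\<not>a) @ [\<not>\<not>a])"
    by (rule Nu_sw) simp
  then have "lam * Nu [a, \<not>a, a] = exp (- \<beta> * Hc (\<not>a) 1) * Nu [\<not>a, a]" by simp
  moreover have "exp (- \<beta> * Hc (\<not>a) 1) * Nu [\<not>a, a] > 0" using p by simp
  ultimately have "lam * Nu [a, \<not>a, a] > 0" by simp
  then have "Nu [a, \<not>a, a] > 0" using l by (simp add: zero_less_mult_iff)
  moreover have "Nu [a, \<not>a, a] \<le> Nu [a]" using Nu_mono cyl_prefix[of "[a]" "[\<not>a, a]"] by simp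
  ultimately show False using \<open>Nu [a] = 0\<close> by simp
qed

abbreviation F :: "bool \<Rightarrow> real" where "F a \<equiv> Fsum \<beta> (Hc a) lam"
abbreviation T :: "bool \<Rightarrow> nat \<Rightarrow> real" where "T a n \<equiv> Ftail \<beta> (Hc a) lam n"
abbreviation Ti :: "bool \<Rightarrow> real" where "Ti a \<equiv> Ftilde \<beta> (Hc a) lam"

lemma V1: "V a 1 = F a * V (\<not>a) 1"
proof -
  have b: "\<beta> \<ge> 0" using beta by simp
  have "F a = T a 1" by (rule Fsum_tail[OF b lam_gt1 Hc_nonneg])
  then show ?thesis using V_tail[of 1 a] by simp
qed

lemma I_cw: assumes "n \<ge> 1" shows "I (replicate n a @ [\<not>a]) = T a n * V (\<not>a) 1 * Nu [a, \<not>a]"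
proof -
  obtain k where k: "n = Suc k" using assms by (cases n) auto
  have "I (replicate n a @ [\<not>a]) = V a n * Nu (replicate n a @ [\<not>a])"
    by (rule I_cls[OF assms]) (simp add: cls_def)
  also have "\<dots> = V a n / lam ^ (n - 1) * Nu [a, \<not>a]" unfolding k Nu_cw by simp
  also have "\<dots> = T a n * V (\<not>a) 1 * Nu [a, \<not>a]" using V_tail[OF assms, of a] by simp
  finally show ?thesis .
qed

lemma I_cw1: "I [a, \<not>a] = V a 1 * Nu [a, \<not>a]"
  using I_cls[of 1 "[a, \<not>a]" a] by (simp add: cls_def)

lemma I_rep_bound: "I (replicate (Suc N) a) \<le> Nu [a] / lam ^ N"
proof -
  have "I (replicate (Suc N) a) \<le> Nu (replicate (Suc N) a)"
    unfolding I_def Nu_int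
    by (rule Bochner_Integration.integral_mono[OF integ_indPhi integ_ind])
       (use Phi_le1 in \<open>auto simp: indicator_def\<close>)
  also have "Nu (replicate (Suc N) a) = Nu [a] / lam ^ N"
  proof (induction N)
    case 0 then show ?case by simp
  next
    case (Suc N)
    have "\<forall>x\<in>cyl (replicate (Suc N) a). H (prep a x) = 0"
      using H_cyl[of a "replicate N a"] by simp
    then have "lam * Nu (a # replicate (Suc N) a) = exp (- \<beta> * 0) * Nu (replicate (Suc N) a)"
      by (rule nu_step)
    then have "Nu (replicate (Suc (Suc N)) a) = Nu (replicate (Suc N) a) / lam"
      using lam_gt1 by (simp add: field_simps)
    also have "\<dots> = Nu [a] / lam ^ N / lam" using Suc.IH by simp
    finally show ?case by (simp add: divide_divide_eq_left mult.commute)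
  qed
  finally show ?thesis .
qed

lemma I_rep_partial: "I [a] = (\<Sum>k<N. I (replicate (Suc k) a @ [\<not>a])) + I (replicate (Suc N) a)"
proof (induction N)
  case 0 then show ?case by simp
next
  case (Suc N)
  have "I (replicate (Suc N) a) = I (replicate (Suc N) a @ [a]) + I (replicate (Suc N) a @ [\<not>a])"
    using I_add[of "replicate (Suc N) a"] by (cases a) auto
  moreover have "replicate (Suc N) a @ [a] = replicate (Suc (Suc N)) a"
    by (simp add: replicate_append_same)
  ultimately show ?case using Suc.IH by simp
qed

lemma I_a: "I [a] = Ti a * V (\<not>a) 1 * Nu [a, \<not>a]"
proof -
  have l: "lam > 1" by (rule lam_gt1)
  have b: "\<beta> \<ge> 0" using beta by simp
  define C where "C = V (\<not>a) 1 * Nu [a, \<not>a]"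
  have r0: "(\<lambda>N. I (replicate (Suc N) a)) \<longlonglongrightarrow> 0"
  proof (rule tendsto_sandwich[of "\<lambda>_. 0" _ _ "\<lambda>N. Nu [a] * (1/lam) ^ N"])
    show "\<forall>\<^sub>F N in sequentially. 0 \<le> I (replicate (Suc N) a)" using I_nonneg by simp
    show "\<forall>\<^sub>F N in sequentially. I (replicate (Suc N) a) \<le> Nu [a] * (1/lam) ^ N"
      using I_rep_bound by (simp add: power_one_over)
    show "(\<lambda>_. 0::real) \<longlonglongrightarrow> 0" by simp
    have "(\<lambda>k. (1/lam) ^ k) \<longlonglongrightarrow> 0" using l by (intro LIMSEQ_realpow_zero) auto
    then show "(\<lambda>N. Nu [a] * (1/lam) ^ N) \<longlonglongrightarrow> 0" by (rule tendsto_mult_right_zero)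
  qed
  have "(\<lambda>N. I [a] - I (replicate (Suc N) a)) \<longlonglongrightarrow> I [a] - 0"
    by (rule tendsto_diff[OF tendsto_const r0])
  moreover have "I [a] - I (replicate (Suc N) a) = (\<Sum>k<N. I (replicate (Suc k) a @ [\<not>a]))" for N
    using I_rep_partial[of a N] by linarith
  ultimately have "(\<lambda>N. \<Sum>k<N. I (replicate (Suc k) a @ [\<not>a])) \<longlonglongrightarrow> I [a]"
    by simp
  then have s1: "(\<lambda>k. I (replicate (Suc k) a @ [\<not>a])) sums I [a]" by (simp add: sums_def)
  have s2: "(\<lambda>k. T a (Suc k) * C) sums (Ti a * C)"
    by (rule sums_mult2[OF tilde_sums[OF b l Hc_nonneg]])
  have "(\<lambda>k. I (replicate (Suc k) a @ [\<not>a])) = (\<lambda>k. T a (Suc k) * C)"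
  proof (rule ext)
    fix k
    show "I (replicate (Suc k) a @ [\<not>a]) = T a (Suc k) * C"
      unfolding C_def using I_cw[of "Suc k" a] by (simp only: mult.assoc le_add1 Suc_eq_plus1_left)
  qed
  then show ?thesis using sums_unique2[OF s1] s2 unfolding C_def by (simp add: mult.assoc)
qed

lemma main:
  shows "let \<mu> = gibbs \<nu> \<Phi>; m = (\<lambda>w. measure \<mu> (cyl w)) in
     m [False, True] = m [True, False]
   \<and> (\<forall>n\<ge>1. m (replicate n False @ [True]) / m [False, True]
              = Ftail \<beta> H1 lam n * Fsum \<beta> H0 lam)
   \<and> m [False] / m [False, True] = Ftilde \<beta> H1 lam / Fsum \<beta> H1 lam
   \<and> (\<forall>n\<ge>1. m (replicate n True @ [False]) / m [True, False]
              = Ftail \<beta> H0 lam n * Fsum \<beta> H1 lam)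
   \<and> m [True] / m [True, False] = Ftilde \<beta> H0 lam / Fsum \<beta> H0 lam
   \<and> (\<forall>n\<ge>1. m ([False] @ replicate n True @ [False]) / m [True, False]
              = exp (- \<beta> * H0 n) * Fsum \<beta> H1 lam / lam ^ n)
   \<and> (\<forall>n\<ge>1. m ([True] @ replicate n False @ [True]) / m [False, True]
              = exp (- \<beta> * H1 n) * Fsum \<beta> H0 lam / lam ^ n)
   \<and> m [False] / m [True]
       = (Fsum \<beta> H0 lam / Fsum \<beta> H1 lam) * (Ftilde \<beta> H1 lam / Ftilde \<beta> H0 lam)"
proof -
  have l: "lam > 1" by (rule lam_gt1)
  have b: "\<beta> \<ge> 0" using beta by simp
  have Zp: "Z > 0" by (rule Z_pos)
  have m: "measure (gibbs \<nu> \<Phi>) (cyl w) = I w / Z" for w by (rule m_eq)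
  have Vp: "V a 1 > 0" for a by (rule V_pos)
  have Np: "Nu [a, \<not>a] > 0" for a by (rule N1_pos)
  have Tip: "Ti a > 0" for a by (rule tilde_pos[OF b l Hc_nonneg])
  have Fp: "F a > 0" for a
  proof -
    have "F a = T a 1" by (rule Fsum_tail[OF b l Hc_nonneg])
    moreover have "T a 1 > 0" by (rule tail_pos[OF b l Hc_nonneg]) (auto intro: Hc_pos)
    ultimately show ?thesis by simp
  qed
  have Ip1: "I [a, \<not>a] > 0" for a using I_cw1[of a] Vp Np by simp
  have c1: "I [False, True] = I [True, False]"
    using inv[of "[False]"] I_add[of "[False]"] by simp
  have c2: "I (replicate n a @ [\<not>a]) / I [a, \<not>a] = T a n * F (\<not>a)" if "n \<ge> 1" for n a
  proof -
    have "I (replicate n a @ [\<not>a]) / I [a, \<not>a] = T a n * V (\<not>a) 1 / V a 1"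
      using I_cw[OF that, of a] I_cw1[of a] Np[of a] by simp
    also have "\<dots> = T a n * F (\<not>a)" using V1[of "\<not>a"] Vp[of a] by simp
    finally show ?thesis .
  qed
  have c3: "I [a] / I [a, \<not>a] = Ti a / F a" for a
  proof -
    have "I [a] / I [a, \<not>a] = Ti a * V (\<not>a) 1 / V a 1"
      using I_a[of a] I_cw1[of a] Np[of a] by simp
    also have "\<dots> = Ti a / F a" using V1[of a] Vp[of a] Vp[of "\<not>a"] Fp[of a] by (simp add: field_simps)
    finally show ?thesis .
  qed
  have c4: "I ((\<not>a) # (replicate n a @ [\<not>a])) / I [a, \<not>a] = exp (- \<beta> * Hc a n) * F (\<not>a) / lam ^ n"
    if n1: "n \<ge> 1" for n a
  proof -
    obtain k where k: "n = Suc k" using n1 by (cases n) auto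
    have sub: "cyl ((\<not>a) # (replicate n a @ [\<not>a])) \<subseteq> cls (\<not>a) 1"
      unfolding cls_def k using cyl_prefix[of "[\<not>a, a]" "replicate k a @ [\<not>a]"] by simp
    have "I ((\<not>a) # (replicate n a @ [\<not>a])) = V (\<not>a) 1 * Nu ((\<not>a) # (replicate n a @ [\<not>a]))"
      by (rule I_cls[OF _ sub]) simp
    also have "Nu ((\<not>a) # (replicate n a @ [\<not>a])) = exp (- \<beta> * Hc a n) * Nu [a, \<not>a] / lam ^ n"
    proof -
      have "lam * Nu ((\<not>a) # (replicate n a @ [\<not>a])) = exp (- \<beta> * Hc a n) * (Nu [a, \<not>a] / lam ^ k)"
        using Nu_sw[OF n1, of a] Nu_cw[of k a] unfolding k by simp
      then show ?thesis unfolding k using l by (simp add: field_simps)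
    qed
    finally have "I ((\<not>a) # (replicate n a @ [\<not>a])) / I [a, \<not>a]
        = V (\<not>a) 1 * (exp (- \<beta> * Hc a n) * Nu [a, \<not>a] / lam ^ n) / (V a 1 * Nu [a, \<not>a])"
      using I_cw1[of a] by simp
    also have "\<dots> = exp (- \<beta> * Hc a n) * (V (\<not>a) 1 / V a 1) / lam ^ n"
      using Np[of a] Vp[of a] by (simp add: field_simps)
    also have "V (\<not>a) 1 / V a 1 = F (\<not>a)" using V1[of "\<not>a"] Vp[of a] by simp
    finally show ?thesis .
  qed
  have c5: "I [False] / I [True] = (F True / F False) * (Ti False / Ti True)"
  proof -
    have e1: "V False 1 * Nu [False, True] = V True 1 * Nu [True, False]"
      using c1 I_cw1[of False] I_cw1[of True] by simp
    have vF: "V False 1 = F False * V True 1" using V1[of False] by simp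
    have vT: "V True 1 = F True * V False 1" using V1[of True] by simp
    have "I [False] / I [True] = Ti False * V True 1 * Nu [False, True] / (Ti True * V False 1 * Nu [True, False])"
      using I_a[of False] I_a[of True] by simp
    also have "\<dots> = (Ti False / Ti True) * (V True 1 / V False 1) * (V True 1 / V False 1)"
      using e1 Vp[of False] Vp[of True] Np[of False] Np[of True] Tip[of True]
      by (simp add: field_simps)
    also have "V True 1 / V False 1 = F True" using vT Vp[of False] by simp
    finally have X: "I [False] / I [True] = Ti False / Ti True * F True * F True" .
    have h1: "V True 1 = F True * (F False * V True 1)"
    proof -
      have "V True 1 = F True * V False 1" by (rule vT)
      also have "\<dots> = F True * (F False * V True 1)" by (simp only: vF)
      finally show ?thesis .
    qed
    have "V True 1 * (F True * F False) = V True 1 * 1"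
      using h1 by (metis mult.commute mult.left_commute mult_1_right)
    then have "F True * F False = 1" using Vp[of True] by (simp only: mult_left_cancel)
    then have FT: "F True = 1 / F False" using Fp[of False] by (simp add: field_simps)
    show ?thesis using X Fp[of False] unfolding FT by (simp add: field_simps)
  qed
  show ?thesis unfolding Let_def m
    using c1 c2[of _ False] c2[of _ True] c3[of False] c3[of True] c4[of _ True] c4[of _ False] c5 Zp
    by (simp add: Hc_F Hc_T)
qed

end

theorem corollary3p6:
  fixes H :: "sigma \<Rightarrow> real" and H0 H1 :: "nat \<Rightarrow> real"
    and \<beta> lam :: real and \<Phi> :: "sigma \<Rightarrow> real" and \<nu> :: "sigma measure"
  assumes pot: "reduced_double_well H H0 H1"
    and beta: "\<beta> > 0"
    and Phi_cont: "continuous_map SigmaT euclideanreal \<Phi>"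
    and Phi_pos: "\<forall>x. \<Phi> x > 0"
    and Phi_max: "(\<forall>x. \<Phi> x \<le> 1) \<and> (\<exists>x. \<Phi> x = 1)"
    and Phi_eig: "transfer \<beta> H \<Phi> = (\<lambda>x. lam * \<Phi> x)"
    and nu_prob: "prob_space \<nu>"
    and nu_sets: "sets \<nu> = sets SigmaM"
    and nu_eig: "\<forall>f. continuous_map SigmaT euclideanreal f \<longrightarrow>
                   (\<integral>x. transfer \<beta> H f x \<partial>\<nu>) = lam * (\<integral>x. f x \<partial>\<nu>)"
  shows "let \<mu> = gibbs \<nu> \<Phi>; m = (\<lambda>w. measure \<mu> (cyl w)) in
     m [False, True] = m [True, False]
   \<and> (\<forall>n\<ge>1. m (replicate n False @ [True]) / m [False, True]
              = Ftail \<beta> H1 lam n * Fsum \<beta> H0 lam)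
   \<and> m [False] / m [False, True] = Ftilde \<beta> H1 lam / Fsum \<beta> H1 lam
   \<and> (\<forall>n\<ge>1. m (replicate n True @ [False]) / m [True, False]
              = Ftail \<beta> H0 lam n * Fsum \<beta> H1 lam)
   \<and> m [True] / m [True, False] = Ftilde \<beta> H0 lam / Fsum \<beta> H0 lam
   \<and> (\<forall>n\<ge>1. m ([False] @ replicate n True @ [False]) / m [True, False]
              = exp (- \<beta> * H0 n) * Fsum \<beta> H1 lam / lam ^ n)
   \<and> (\<forall>n\<ge>1. m ([True] @ replicate n False @ [True]) / m [False, True]
              = exp (- \<beta> * H1 n) * Fsum \<beta> H0 lam / lam ^ n)
   \<and> m [False] / m [True]
       = (Fsum \<beta> H0 lam / Fsum \<beta> H1 lam) * (Ftilde \<beta> H1 lam / Ftilde \<beta> H0 lam)"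
proof -
  have D: "dw H H0 H1 \<beta> lam \<Phi> \<nu>"
    by (rule dw.intro[OF pot beta Phi_cont Phi_pos Phi_max Phi_eig nu_prob nu_sets nu_eig])
  show ?thesis by (rule dw.main[OF D])
qed

end
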